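(* There is a constant $C_0$ such that the following holds. Let $n\ge1$, let $b_1,\dots,b_n\ge2$ be integers and $\varepsilon_1,\dots,\varepsilon_n\in\{+1,-1\}$ with $b_{j+1}\ge b_j^2$ for $1\le j\le n-1$, and let $x=[\langle b_j:\varepsilon_j\rangle_{j=1}^n]$. Define $x_0=1$ and $x_i=G^{\circ(i-1)}(x)$ for $1\le i\le n$. Then \[\frac{|x_n|}{|x_1|}\le C_0\prod_{i=0}^{n-1}|x_i|.\]
   Context: For $x\in\mathbb{R}$, $[x]$ denotes the closest integer to $x$ with the convention $x\in([x]-1/2,[x]+1/2]$ for $x>0$, $x\in[[x]-1/2,[x]+1/2)$ for $x<0$, and $[0]=0$. $G(z)=-1/z-[\operatorname{Re}(-1/z)]$ for $z\ne0$. For integers $b_j\ge2$ and $\varepsilon_j\in\{\pm1\}$, $[\langle b_j:\varepsilon_j\rangle_{j=1}^n]=\cfrac{\varepsilon_1}{b_1+\cfrac{\varepsilon_2}{\ddots+\cfrac{\varepsilon_n}{b_n}}}$. *)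

theory Defs
  imports "HOL-Analysis.Analysis"
begin

text \<open>Nearest integer with the paper's tie-breaking convention:
  for x > 0, x in ([x]-1/2, [x]+1/2]; for x < 0, x in [[x]-1/2, [x]+1/2); [0] = 0.\<close>
definition nint :: "real \<Rightarrow> int" where
  "nint x = (if x > 0 then \<lceil>x - 1/2\<rceil> else if x < 0 then \<lfloor>x + 1/2\<rfloor> else 0)"

text \<open>G(z) = -1/z - [Re(-1/z)] (for z = 0 this gives 0, irrelevant).\<close>
definition G :: "complex \<Rightarrow> complex" where
  "G z = -1/z - of_int (nint (Re (-1/z)))"

fun cfrac :: "(int \<times> int) list \<Rightarrow> real" where
  "cfrac [] = 0"
| "cfrac ((b, e) # rest) = of_int e / (of_int b + cfrac rest)"

end

theory Submission
  imports Defs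
begin

definition tcf :: "nat \<Rightarrow> (nat \<Rightarrow> int) \<Rightarrow> (nat \<Rightarrow> int) \<Rightarrow> nat \<Rightarrow> real" where
  "tcf n b eps k = cfrac (map (\<lambda>j. (b j, eps j)) [k..<n+1])"

lemma tcf_step: "k \<le> n \<Longrightarrow> tcf n b eps k = of_int (eps k) / (of_int (b k) + tcf n b eps (Suc k))"
  unfolding tcf_def by (subst upt_conv_Cons) auto

lemma tcf_end: "tcf n b eps (Suc n) = 0"
  unfolding tcf_def by simp

lemma nint_int_plus:
  assumes "\<bar>v\<bar> < 1/2" shows "nint (of_int m + v) = m"
proof -
  consider "of_int m + v > 0" | "of_int m + v < 0" | "of_int m + v = 0" by linarith
  then show ?thesis
  proof cases
    case 1
    have "-1/2 < v" "v < 1/2" using assms by auto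
    then show ?thesis using 1 by (simp add: nint_def ceiling_eq_iff)
  next
    case 2
    have "-1/2 < v" "v < 1/2" using assms by auto
    then show ?thesis using 2 by (simp add: nint_def floor_eq_iff)
  next
    case 3
    then have "\<bar>real_of_int m\<bar> < 1/2" using assms by linarith
    then have "m = 0" by linarith
    then show ?thesis using 3 by (simp add: nint_def)
  qed
qed

lemma G_step:
  fixes c bb :: int and u :: real
  assumes c: "c \<in> {1,-1}" and u: "\<bar>u\<bar> < 1/2" and nz: "of_int bb + u \<noteq> 0"
  shows "G (complex_of_real (of_int c / (of_int bb + u))) = complex_of_real (- of_int c * u)"
proof -
  have e1: "-1 / (of_int c / (of_int bb + u)) = of_int (-c*bb) + (- of_int c * u)"
    using c nz by (auto simp: field_simps)
  have e2: "-1 / complex_of_real (of_int c / (of_int bb + u)) = complex_of_real (of_int (-c*bb) + (- of_int c * u))"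
    by (simp only: e1[symmetric]) simp
  have "\<bar>- of_int c * u\<bar> < 1/2" using c u by auto
  then have n: "nint (Re (complex_of_real (of_int (-c*bb) + (- of_int c * u)))) = -c*bb"
    by (simp only: Re_complex_of_real nint_int_plus)
  show ?thesis unfolding G_def e2 n by simp
qed

context
  fixes n :: nat and b eps :: "nat \<Rightarrow> int"
  assumes n1: "n \<ge> 1"
    and bge: "\<And>j. 1 \<le> j \<Longrightarrow> j \<le> n \<Longrightarrow> b j \<ge> 2"
    and epsv: "\<And>j. 1 \<le> j \<Longrightarrow> j \<le> n \<Longrightarrow> eps j \<in> {1, -1}"
    and bsq: "\<And>j. 1 \<le> j \<Longrightarrow> j < n \<Longrightarrow> b (j + 1) \<ge> (b j)\<^sup>2"
begin

lemma b4: assumes "2 \<le> k" "k \<le> n" shows "b k \<ge> 4"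
proof -
  have "b (k - 1 + 1) \<ge> (b (k-1))\<^sup>2" using bsq[of "k-1"] assms by auto
  moreover have "b (k-1) \<ge> 2" using bge[of "k-1"] assms by auto
  moreover have "(b (k-1))\<^sup>2 \<ge> 2\<^sup>2" using calculation(2) by (intro power_mono) auto
  ultimately show ?thesis using assms by simp
qed

lemma small: assumes "2 \<le> k" "k \<le> Suc n" shows "\<bar>tcf n b eps k\<bar> \<le> 1/3"
  using assms(2)
proof (induct rule: inc_induct)
  case base then show ?case by (simp add: tcf_end)
next
  case (step m)
  have m2: "2 \<le> m" "m \<le> n" using step assms by auto
  have b: "real_of_int (b m) \<ge> 4" using b4[OF m2] by simp
  have e: "\<bar>real_of_int (eps m)\<bar> = 1" using epsv[of m] m2 by auto
  have w: "\<bar>real_of_int (b m) + tcf n b eps (Suc m)\<bar> \<ge> 11/3" using b step(3) by linarith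
  have "\<bar>tcf n b eps m\<bar> = 1 / \<bar>real_of_int (b m) + tcf n b eps (Suc m)\<bar>"
    using tcf_step[OF m2(2), of b eps] e by (simp add: abs_divide)
  also have "\<dots> \<le> 1 / (11/3)" using w by (intro divide_left_mono) auto
  finally show ?case by simp
qed

lemma t_lower: assumes "1 \<le> k" "k \<le> n" shows "\<bar>tcf n b eps k\<bar> \<ge> 1 / (real_of_int (b k) + 1)"
proof -
  have s: "\<bar>tcf n b eps (Suc k)\<bar> \<le> 1/3" using small assms by auto
  have b: "real_of_int (b k) \<ge> 2" using bge[OF assms] by simp
  have e: "\<bar>real_of_int (eps k)\<bar> = 1" using epsv[OF assms] by auto
  have w: "\<bar>real_of_int (b k) + tcf n b eps (Suc k)\<bar> \<le> real_of_int (b k) + 1"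
       "\<bar>real_of_int (b k) + tcf n b eps (Suc k)\<bar> > 0" using b s by linarith+
  have "\<bar>tcf n b eps k\<bar> = 1 / \<bar>real_of_int (b k) + tcf n b eps (Suc k)\<bar>"
    using tcf_step[OF assms(2), of b eps] e by (simp add: abs_divide)
  also have "\<dots> \<ge> 1 / (real_of_int (b k) + 1)" using w by (intro divide_left_mono) auto
  finally show ?thesis .
qed

lemma t_n: "\<bar>tcf n b eps n\<bar> = 1 / real_of_int (b n)"
proof -
  have b: "real_of_int (b n) \<ge> 2" using bge[of n] n1 by simp
  have e: "\<bar>real_of_int (eps n)\<bar> = 1" using epsv[of n] n1 by auto
  show ?thesis using tcf_step[of n n b eps] e b by (simp add: abs_divide tcf_end)
qed

lemma iter: assumes "1 \<le> i" "i \<le> n"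
  shows "\<exists>\<sigma>\<in>{1,-1::int}. (G ^^ (i - 1)) (complex_of_real (tcf n b eps 1))
           = complex_of_real (of_int \<sigma> * tcf n b eps i)"
  using assms(1) assms(2)
proof (induct rule: dec_induct)
  case base then show ?case by (intro bexI[of _ 1]) auto
next
  case (step m)
  have "\<exists>\<sigma>\<in>{1,-1::int}. (G ^^ (m - 1)) (complex_of_real (tcf n b eps 1))
           = complex_of_real (of_int \<sigma> * tcf n b eps m)" using step by auto
  then obtain \<sigma> where s: "\<sigma> \<in> {1,-1}"
    and h: "(G ^^ (m - 1)) (complex_of_real (tcf n b eps 1)) = complex_of_real (of_int \<sigma> * tcf n b eps m)"
    by blast
  have m: "1 \<le> m" "m \<le> n" using step by auto
  have u: "\<bar>tcf n b eps (Suc m)\<bar> < 1/2" using small[of "Suc m"] m by auto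
  have b: "real_of_int (b m) \<ge> 2" using bge[OF m] by simp
  have nz: "real_of_int (b m) + tcf n b eps (Suc m) \<noteq> 0" using u b by linarith
  have c: "\<sigma> * eps m \<in> {1,-1}" using s epsv[OF m] by auto
  have eq: "of_int \<sigma> * tcf n b eps m = of_int (\<sigma> * eps m) / (of_int (b m) + tcf n b eps (Suc m))"
    using tcf_step[OF m(2), of b eps] by simp
  have "(G ^^ (Suc m - 1)) (complex_of_real (tcf n b eps 1))
        = G ((G ^^ (m - 1)) (complex_of_real (tcf n b eps 1)))"
    using m(1) by (cases m) auto
  also have "\<dots> = complex_of_real (- of_int (\<sigma> * eps m) * tcf n b eps (Suc m))"
    unfolding h eq by (rule G_step[OF c u nz])
  finally show ?case using c by (intro bexI[of _ "- (\<sigma> * eps m)"]) auto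
qed

lemma key_ineq:
  fixes a B :: real assumes "a \<ge> 2" "B \<ge> a\<^sup>2"
  shows "a * (a - 1) * (B + 1) \<le> B * (B - 1)"
proof -
  have "a * (a - 1) \<le> B - 2" using assms by (simp add: power2_eq_square algebra_simps)
  moreover have "B + 1 \<ge> 0" using assms zero_le_power2[of a] by linarith
  ultimately have "a * (a - 1) * (B + 1) \<le> (B - 2) * (B + 1)"
    by (intro mult_right_mono)
  also have "\<dots> \<le> B * (B - 1)" by (simp add: algebra_simps)
  finally show ?thesis .
qed

lemma prodbound: assumes "1 \<le> m" "m < n"
  shows "\<bar>tcf n b eps 1\<bar> * (\<Prod>i<m. \<bar>tcf n b eps (Suc i)\<bar>)
          \<ge> 1 / (5 * real_of_int (b m) * (real_of_int (b m) - 1))"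
  using assms(1) assms(2)
proof (induct rule: dec_induct)
  case base
  have b: "real_of_int (b 1) \<ge> 2" using bge[of 1] n1 by simp
  have l: "\<bar>tcf n b eps 1\<bar> \<ge> 1 / (real_of_int (b 1) + 1)" using t_lower[of 1] n1 by simp
  have "1 / (5 * real_of_int (b 1) * (real_of_int (b 1) - 1)) \<le> 1 / (real_of_int (b 1) + 1)^2"
  proof (intro divide_left_mono)
    have "(real_of_int (b 1) - 2) * (4 * real_of_int (b 1) + 1) \<ge> 0" using b by simp
    then show "(real_of_int (b 1) + 1)^2 \<le> 5 * real_of_int (b 1) * (real_of_int (b 1) - 1)"
      by (simp add: power2_eq_square algebra_simps)
    show "0 \<le> (1::real)" by simp
    show "0 < 5 * real_of_int (b 1) * (real_of_int (b 1) - 1) * (real_of_int (b 1) + 1)\<^sup>2"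
      using b by simp
  qed
  also have "\<dots> = (1 / (real_of_int (b 1) + 1)) * (1 / (real_of_int (b 1) + 1))"
    by (simp add: power2_eq_square)
  also have "\<dots> \<le> \<bar>tcf n b eps 1\<bar> * \<bar>tcf n b eps 1\<bar>"
    using l b by (intro mult_mono) auto
  finally show ?case by simp
next
  case (step m)
  have m: "1 \<le> m" "Suc m \<le> n" "m < n" using step by auto
  define a where "a = real_of_int (b m)"
  define B where "B = real_of_int (b (Suc m))"
  have a: "a \<ge> 2" using bge[of m] m unfolding a_def by simp
  have aB: "B \<ge> a\<^sup>2" using bsq[of m] m unfolding a_def B_def by simp
  have IH: "\<bar>tcf n b eps 1\<bar> * (\<Prod>i<m. \<bar>tcf n b eps (Suc i)\<bar>) \<ge> 1 / (5 * a * (a - 1))"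
    using step unfolding a_def by simp
  have l: "\<bar>tcf n b eps (Suc m)\<bar> \<ge> 1 / (B + 1)" using t_lower[of "Suc m"] m unfolding B_def by simp
  have pa: "a * (a - 1) > 0" using a by simp
  have "a\<^sup>2 \<ge> 2\<^sup>2" using a by (intro power_mono) auto
  then have B2: "B \<ge> 4" using aB by simp
  have "1 / (5 * B * (B - 1)) \<le> 1 / (5 * (a * (a - 1) * (B + 1)))"
  proof (intro divide_left_mono)
    show "5 * (a * (a - 1) * (B + 1)) \<le> 5 * B * (B - 1)" using key_ineq[OF a aB] by simp
    have "0 < 5 * B * (B - 1)" using B2 by simp
    moreover have "0 < 5 * (a * (a - 1) * (B + 1))" using pa B2 by simp
    ultimately show "0 < 5 * B * (B - 1) * (5 * (a * (a - 1) * (B + 1)))" by (rule mult_pos_pos)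
  qed simp
  also have "\<dots> = (1 / (5 * a * (a - 1))) * (1 / (B + 1))" by (simp add: algebra_simps)
  also have "\<dots> \<le> (\<bar>tcf n b eps 1\<bar> * (\<Prod>i<m. \<bar>tcf n b eps (Suc i)\<bar>)) * \<bar>tcf n b eps (Suc m)\<bar>"
    using IH l pa B2 by (intro mult_mono) (auto intro!: mult_nonneg_nonneg prod_nonneg)
  finally show ?case unfolding B_def by (simp add: mult.assoc)
qed

end

theorem lemma6p5:
  shows "\<exists>C0::real. \<forall>(n::nat) (b::nat \<Rightarrow> int) (eps::nat \<Rightarrow> int).
    n \<ge> 1 \<and>
    (\<forall>j. 1 \<le> j \<and> j \<le> n \<longrightarrow> b j \<ge> 2) \<and>
    (\<forall>j. 1 \<le> j \<and> j \<le> n \<longrightarrow> eps j \<in> {1, -1}) \<and>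
    (\<forall>j. 1 \<le> j \<and> j < n \<longrightarrow> b (j + 1) \<ge> (b j)\<^sup>2)
    \<longrightarrow>
    (let x = complex_of_real (cfrac (map (\<lambda>j. (b j, eps j)) [1..<n+1]));
         xs = (\<lambda>i::nat. if i = 0 then 1 else (G ^^ (i - 1)) x)
     in norm (xs n) / norm (xs 1) \<le> C0 * (\<Prod>i<n. norm (xs i)))"
proof (intro exI[of _ "5::real"] allI impI)
  fix n :: nat and b eps :: "nat \<Rightarrow> int"
  assume H: "n \<ge> 1 \<and>
    (\<forall>j. 1 \<le> j \<and> j \<le> n \<longrightarrow> b j \<ge> 2) \<and>
    (\<forall>j. 1 \<le> j \<and> j \<le> n \<longrightarrow> eps j \<in> {1, -1}) \<and>
    (\<forall>j. 1 \<le> j \<and> j < n \<longrightarrow> b (j + 1) \<ge> (b j)\<^sup>2)"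
  have n1: "n \<ge> 1" using H by blast
  have bge: "\<And>j. 1 \<le> j \<Longrightarrow> j \<le> n \<Longrightarrow> b j \<ge> 2" using H by blast
  have epsv: "\<And>j. 1 \<le> j \<Longrightarrow> j \<le> n \<Longrightarrow> eps j \<in> {1, -1}" using H by blast
  have bsq: "\<And>j. 1 \<le> j \<Longrightarrow> j < n \<Longrightarrow> b (j + 1) \<ge> (b j)\<^sup>2" using H by blast
  note A = n1 bge epsv bsq
  define x where "x = complex_of_real (cfrac (map (\<lambda>j. (b j, eps j)) [1..<n+1]))"
  have x: "x = complex_of_real (tcf n b eps 1)" by (simp add: tcf_def x_def)
  define xs where "xs = (\<lambda>i::nat. if i = 0 then 1 else (G ^^ (i - 1)) x)"
  have nx: "norm (xs i) = \<bar>tcf n b eps i\<bar>" if hi: "1 \<le> i" "i \<le> n" for i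
  proof -
    obtain \<sigma> where s: "\<sigma> \<in> {1,-1::int}" and h: "(G ^^ (i - 1)) (complex_of_real (tcf n b eps 1))
           = complex_of_real (of_int \<sigma> * tcf n b eps i)" using iter[of n b eps i, OF A hi] by blast
    have "xs i = complex_of_real (of_int \<sigma> * tcf n b eps i)" using hi h unfolding xs_def x by simp
    then show ?thesis using s by (auto simp: abs_mult)
  qed
  obtain m where nm: "n = Suc m" using n1 by (cases n) auto
  have prodeq: "(\<Prod>i<n. norm (xs i)) = (\<Prod>i<m. \<bar>tcf n b eps (Suc i)\<bar>)"
  proof -
    have "(\<Prod>i<n. norm (xs i)) = norm (xs 0) * (\<Prod>i<m. norm (xs (Suc i)))"
      unfolding nm prod.lessThan_Suc_shift by simp
    also have "\<dots> = (\<Prod>i<m. \<bar>tcf n b eps (Suc i)\<bar>)"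
    proof -
      have "xs 0 = 1" by (simp add: xs_def)
      moreover have "(\<Prod>i<m. norm (xs (Suc i))) = (\<Prod>i<m. \<bar>tcf n b eps (Suc i)\<bar>)"
      proof (rule prod.cong)
        fix i assume "i \<in> {..<m}"
        then have "1 \<le> Suc i" "Suc i \<le> n" using nm by auto
        then show "norm (xs (Suc i)) = \<bar>tcf n b eps (Suc i)\<bar>" by (rule nx)
      qed simp
      ultimately show ?thesis by simp
    qed
    finally show ?thesis .
  qed
  have t1: "\<bar>tcf n b eps 1\<bar> > 0"
  proof -
    have "real_of_int (b 1) \<ge> 2" using bge[of 1] n1 by simp
    then have "1 / (real_of_int (b 1) + 1) > 0" by simp
    then show ?thesis using t_lower[of n b eps 1, OF A] n1 by linarith
  qed
  have goal: "norm (xs n) / norm (xs 1) \<le> 5 * (\<Prod>i<n. norm (xs i))"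
  proof (cases "m = 0")
    case True
    then have "n = 1" using nm by simp
    have "norm (xs n) / norm (xs 1) \<le> 1" unfolding \<open>n = 1\<close> by (simp add: divide_self_if)
    moreover have "(\<Prod>i<n. norm (xs i)) = 1" using prodeq True by simp
    ultimately show ?thesis by simp
  next
    case False
    then have m: "1 \<le> m" "m < n" using nm by auto
    define P where "P = (\<Prod>i<m. \<bar>tcf n b eps (Suc i)\<bar>)"
    define a where "a = real_of_int (b m)"
    define B where "B = real_of_int (b n)"
    have a: "a \<ge> 2" using bge[of m] m unfolding a_def by simp
    have aB: "B \<ge> a\<^sup>2" using bsq[of m] m nm unfolding a_def B_def by simp
    have pb: "\<bar>tcf n b eps 1\<bar> * P \<ge> 1 / (5 * a * (a - 1))"
      using prodbound[of n b eps m, OF A m] unfolding P_def a_def by simp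
    have pa: "a * (a - 1) > 0" using a by simp
    have le: "a * (a - 1) \<le> B" using aB a by (simp add: power2_eq_square algebra_simps)
    have "1 / B \<le> 1 / (a * (a - 1))" using le pa by (intro divide_left_mono) auto
    also have "\<dots> = 5 * (1 / (5 * a * (a - 1)))" by simp
    also have "\<dots> \<le> 5 * (\<bar>tcf n b eps 1\<bar> * P)" using pb by linarith
    finally have "1 / B \<le> 5 * P * \<bar>tcf n b eps 1\<bar>" by (simp add: algebra_simps)
    moreover have "norm (xs n) = 1 / B" using nx[of n] n1 t_n[of n b eps, OF A] unfolding B_def by simp
    moreover have "norm (xs 1) = \<bar>tcf n b eps 1\<bar>" using nx[of 1] n1 by simp
    ultimately have "norm (xs n) / norm (xs 1) = (1 / B) / \<bar>tcf n b eps 1\<bar>" by simp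
    also have "\<dots> \<le> 5 * P" using t1 \<open>1 / B \<le> 5 * P * \<bar>tcf n b eps 1\<bar>\<close>
      by (simp only: pos_divide_le_eq)
    finally show ?thesis using prodeq unfolding P_def by simp
  qed
  show "let x = complex_of_real (cfrac (map (\<lambda>j. (b j, eps j)) [1..<n+1]));
         xs = (\<lambda>i::nat. if i = 0 then 1 else (G ^^ (i - 1)) x)
     in norm (xs n) / norm (xs 1) \<le> 5 * (\<Prod>i<n. norm (xs i))"
    unfolding Let_def x_def[symmetric] using goal unfolding xs_def .
qed

end
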